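(* For every $k\in\mathbb{N}$, $$D_{\mathbb{R},4k}\ge\left[\sum_{j=0}^{2k}|B_j|^{\frac{8k}{4k+1}}\right]^{\frac{4k+1}{8k}},\qquad B_j=\sum_{\ell=0}^{\lfloor j/2\rfloor}\frac{k!\,(-3)^{j-2\ell}}{\ell!\,(j-2\ell)!\,(k-j+\ell)!}\ (j=0,\dots,2k),$$ with terms having $k-j+\ell<0$ interpreted as $0$; the $B_j$ are the coefficients of $(x^4+y^4-3x^2y^2)^k$.
   Context: $\ell_\infty^n$ is $\mathbb{R}^n$ with the sup norm; for a polynomial $P$ on $\ell_\infty^n$, $\|P\|=\sup_{x\in[-1,1]^n}|P(x)|$. $D_{\mathbb{R},m}$ is the smallest constant $D$ such that for every $N$ and every real $m$-homogeneous polynomial $P(x)=\sum_{|\alpha|=m}a_\alpha x^\alpha$ on $\ell_\infty^N$, $\big(\sum_{|\alpha|=m}|a_\alpha|^{\frac{2m}{m+1}}\big)^{\frac{m+1}{2m}}\le D\|P\|$. $\lfloor h\rfloor$ is the integer part. *)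

theory Defs
  imports "HOL-Analysis.Analysis"
begin

definition multi_indices :: "nat \<Rightarrow> nat \<Rightarrow> (nat \<Rightarrow> nat) set" where
  "multi_indices N m = {\<alpha>. (\<forall>i\<ge>N. \<alpha> i = 0) \<and> (\<Sum>i<N. \<alpha> i) = m}"

definition hpoly :: "nat \<Rightarrow> nat \<Rightarrow> ((nat \<Rightarrow> nat) \<Rightarrow> real) \<Rightarrow> (nat \<Rightarrow> real) \<Rightarrow> real" where
  "hpoly N m a x = (\<Sum>\<alpha>\<in>multi_indices N m. a \<alpha> * (\<Prod>i<N. x i ^ \<alpha> i))"

definition poly_norm :: "nat \<Rightarrow> nat \<Rightarrow> ((nat \<Rightarrow> nat) \<Rightarrow> real) \<Rightarrow> real" where
  "poly_norm N m a = Sup {\<bar>hpoly N m a x\<bar> | x. \<forall>i<N. \<bar>x i\<bar> \<le> 1}"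

text \<open>Real polynomial Bohnenblust--Hille constant D_{R,m}: the smallest constant D
  (infimum taken in the extended reals, so it is \<infinity> if no such D exists).\<close>
definition BH_real :: "nat \<Rightarrow> ereal" where
  "BH_real m = Inf {ereal D | D. \<forall>N a.
      (\<Sum>\<alpha>\<in>multi_indices N m. \<bar>a \<alpha>\<bar> powr (2 * real m / (real m + 1)))
        powr ((real m + 1) / (2 * real m)) \<le> D * poly_norm N m a}"

definition Bcoef :: "nat \<Rightarrow> nat \<Rightarrow> real" where
  "Bcoef k j = (\<Sum>l = 0..j div 2. if j \<le> k + l then
      fact k * (-3) ^ (j - 2 * l) / (fact l * fact (j - 2 * l) * fact (k + l - j)) else 0)"

end

theory Submission imports Defs begin

lemma core:
  fixes u v :: real
  shows "(\<Sum>j = 0..2 * k. Bcoef k j * u^(2*k-j) * v^j) = (u^2 + v^2 - 3* u* v) ^ k"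
proof -
  define T where "T = (\<lambda>(m::nat,l::nat). of_nat (k choose m) * of_nat (m choose l) * (-3::real)^(m-l) * u^(2*k-(m+l)) * v^(m+l))"
  define R where "R = (\<lambda>(j::nat,l::nat). (if j \<le> k + l then
      fact k * (-3) ^ (j - 2 * l) / (fact l * fact (j - 2 * l) * fact (k + l - j)) else 0) * u^(2*k-j) * (v::real)^j)"
  have "(u^2 + v^2 - 3* u* v) ^ k = ((v^2 + (-3* u* v)) + u^2)^k" by (simp add: algebra_simps)
  also have "\<dots> = (\<Sum>m\<le>k. of_nat (k choose m) * (v^2 + (-3* u* v))^m * (u^2)^(k-m))"
    by (rule binomial_ring)
  also have "\<dots> = (\<Sum>m\<le>k. \<Sum>l\<le>m. T (m,l))"
  proof (rule sum.cong[OF refl])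
    fix m assume m: "m \<in> {..k}"
    have "(v^2 + (-3* u* v))^m = (\<Sum>l\<le>m. of_nat (m choose l) * (v^2)^l * (-3* u* v)^(m-l))"
      by (rule binomial_ring)
    hence "of_nat (k choose m) * (v^2 + (-3* u* v))^m * (u^2)^(k-m)
      = (\<Sum>l\<le>m. of_nat (k choose m) * (of_nat (m choose l) * (v^2)^l * (-3* u* v)^(m-l)) * (u^2)^(k-m))"
      by (simp add: sum_distrib_left sum_distrib_right)
    also have "\<dots> = (\<Sum>l\<le>m. T (m,l))"
    proof (rule sum.cong[OF refl])
      fix l assume l: "l \<in> {..m}"
      have "2*k-(m+l) = 2*(k-m) + (m-l)" using m l by simp
      hence e1: "u^(2*k-(m+l)) = (u^2)^(k-m) * u^(m-l)"
        by (simp add: power_mult[symmetric] power_add[symmetric])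
      have "m+l = 2*l + (m-l)" using m l by simp
      hence e2: "v^(m+l) = (v^2)^l * v^(m-l)"
        by (metis power_add power_mult)
      show "of_nat (k choose m) * (of_nat (m choose l) * (v^2)^l * (-3* u* v)^(m-l)) * (u^2)^(k-m) = T (m,l)"
        proof -
        have "T (m,l) = real (k choose m) * real (m choose l) * (-3) ^ (m - l) * ((u^2)^(k-m) * u^(m-l)) * ((v^2)^l * v^(m-l))"
          unfolding T_def e1[symmetric] e2[symmetric] by simp
        also have "\<dots> = of_nat (k choose m) * (of_nat (m choose l) * (v^2)^l * (-3*u * v)^(m-l)) * (u^2)^(k-m)"
          using power_mult_distrib[of "-3*u" v "m-l"] power_mult_distrib[of "-3" u "m-l"] by (simp add: mult_ac)
        finally show ?thesis by simp
      qed
    qed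
    finally show "of_nat (k choose m) * (v^2 + (-3* u* v))^m * (u^2)^(k-m) = (\<Sum>l\<le>m. T (m,l))" .
  qed
  also have "\<dots> = sum T (Sigma {..k} (\<lambda>m. {..m}))"
    by (simp add: sum.Sigma)
  also have "\<dots> = sum R ((\<lambda>(m,l). (m+l,l)) ` Sigma {..k} (\<lambda>m. {..m}))"
  proof (subst sum.reindex)
    show "inj_on (\<lambda>(m, l). (m + l, l)) (Sigma {..k} (\<lambda>m. {..m}))"
      by (auto simp: inj_on_def)
    show "sum T (SIGMA m:{..k}. {..m}) = sum (R \<circ> (\<lambda>(m, l). (m + l, l))) (SIGMA m:{..k}. {..m})"
    proof (rule sum.cong[OF refl])
      fix p assume p: "p \<in> (SIGMA m:{..k}. {..m})"
      then obtain m l where pe: "p = (m,l)" and m: "m \<le> k" and l: "l \<le> m" by auto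
      have c: "real (k choose m) * real (m choose l) = fact k / (fact l * fact (m-l) * fact (k-m))"
        using m l by (simp add: binomial_fact)
      have a1: "m + l - 2*l = m - l" using l by simp
      have a2: "k + l - (m+l) = k - m" by simp
      show "T p = (R \<circ> (\<lambda>(m, l). (m + l, l))) p"
        unfolding pe T_def R_def using m l a1 a2 c by (simp add: field_simps)
    qed
  qed
  also have "\<dots> = sum R (Sigma {0..2 * k} (\<lambda>j. {0..j div 2}))"
  proof (rule sum.mono_neutral_left)
    show "finite (Sigma {0..2 * k} (\<lambda>j. {0..j div 2}))" by auto
    show "(\<lambda>(m, l). (m + l, l)) ` (SIGMA m:{..k}. {..m}) \<subseteq> (SIGMA j:{0..2 * k}. {0..j div 2})"
      by auto
    show "\<forall>i\<in>(SIGMA j:{0..2 * k}. {0..j div 2}) - (\<lambda>(m, l). (m + l, l)) ` (SIGMA m:{..k}. {..m}). R i = 0"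
    proof
      fix p assume p: "p \<in> (SIGMA j:{0..2 * k}. {0..j div 2}) - (\<lambda>(m, l). (m + l, l)) ` (SIGMA m:{..k}. {..m})"
      then obtain j l where pe: "p = (j,l)" and j: "j \<le> 2*k" and l: "l \<le> j div 2" by auto
      have "\<not> j \<le> k + l"
      proof
        assume h: "j \<le> k + l"
        have "(j - l, l) \<in> (SIGMA m:{..k}. {..m})" using h l by auto
        moreover have "(j,l) = (\<lambda>(m, l). (m + l, l)) (j-l,l)" using l by auto
        ultimately show False using p pe by blast
      qed
      thus "R p = 0" unfolding pe R_def by simp
    qed
  qed
  also have "\<dots> = (\<Sum>j = 0..2 * k. Bcoef k j * u^(2*k-j) * v^j)"
    by (simp add: sum.Sigma[symmetric] Bcoef_def R_def sum_distrib_right)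
  finally show ?thesis ..
qed


definition gidx :: "nat \<Rightarrow> nat \<Rightarrow> nat \<Rightarrow> nat" where
  "gidx m i = (\<lambda>n. if n = 0 then m - i else if n = 1 then i else 0)"

lemma bij_gidx: "bij_betw (gidx m) {0..m} (multi_indices 2 m)"
proof (rule bij_betwI[where g = "\<lambda>\<alpha>. \<alpha> 1"])
  show "gidx m \<in> {0..m} \<rightarrow> multi_indices 2 m"
    by (auto simp: gidx_def multi_indices_def numeral_2_eq_2)
  show "(\<lambda>\<alpha>. \<alpha> 1) \<in> multi_indices 2 m \<rightarrow> {0..m}"
    by (auto simp: multi_indices_def numeral_2_eq_2)
  show "\<And>x. x \<in> {0..m} \<Longrightarrow> gidx m x 1 = x" by (simp add: gidx_def)
  fix \<alpha> assume "\<alpha> \<in> multi_indices 2 m"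
  hence h: "\<forall>i\<ge>2. \<alpha> i = 0" "\<alpha> 0 + \<alpha> 1 = m"
    by (auto simp: multi_indices_def numeral_2_eq_2)
  show "gidx m (\<alpha> 1) = \<alpha>"
  proof
    fix n show "gidx m (\<alpha> 1) n = \<alpha> n"
      using h by (cases "n = 0"; cases "n = 1"; auto simp: gidx_def)
  qed
qed

lemma sum_MI2: "sum F (multi_indices 2 m) = (\<Sum>i = 0..m. F (gidx m i))"
  using sum.reindex_bij_betw[OF bij_gidx, of F m] by simp

lemma even_sum: fixes n :: nat shows "(\<Sum>i = 0..2 * n. if even i then H (i div 2) else (0::real)) = (\<Sum>j = 0..n. H j)"
proof (induction n)
  case 0 then show ?case by simp
next
  case (Suc n)
  have "2 * Suc n = Suc (Suc (2 * n))" by simp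
  then show ?case using Suc by (simp add: sum.atLeast0_atMost_Suc)
qed

lemma bound_base:
  fixes u v :: real
  assumes "0 \<le> u" "u \<le> 1" "0 \<le> v" "v \<le> 1"
  shows "\<bar>u^2 + v^2 - 3*u * v\<bar> \<le> 1"
proof -
  have "u^2 + v^2 - 3*u * v \<ge> - (u * v)" using power2_diff[of u v] zero_le_power2[of "u - v"] by linarith
  moreover have "u * v \<le> 1" using assms by (simp add: mult_le_one)
  moreover have "u^2 + v^2 - 3*u * v \<le> 1"
  proof (cases "v \<le> u")
    case True
    have "v^2 \<le> 3 * u * v" using True assms by (simp add: power2_eq_square mult_right_mono) 
    moreover have "u^2 \<le> 1" using assms by (simp add: power_le_one)
    ultimately show ?thesis by linarith
  next
    case False
    have "u * u \<le> u * v" using False assms by (simp add: mult_left_mono)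
    moreover have "0 \<le> u * v" using assms by simp
    ultimately have "u^2 \<le> 3 * u * v" by (simp add: power2_eq_square)
    moreover have "v^2 \<le> 1" using assms by (simp add: power_le_one)
    ultimately show ?thesis by linarith
  qed
  ultimately show ?thesis by linarith
qed


lemma prod2: "(\<Prod>n<(2::nat). f n) = f 0 * (f 1 :: real)"
  by (simp add: numeral_2_eq_2)

theorem mainTheorem10:
  fixes k :: nat
  assumes "k \<ge> 1"
  shows "BH_real (4 * k) \<ge>
    ereal ((\<Sum>j = 0..2 * k. \<bar>Bcoef k j\<bar> powr (8 * real k / (4 * real k + 1)))
            powr ((4 * real k + 1) / (8 * real k)))"
proof -
  define a where "a = (\<lambda>\<alpha>::nat\<Rightarrow>nat. if even (\<alpha> 1) then Bcoef k (\<alpha> 1 div 2) else 0)"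
  define P where "P = (\<lambda>x::nat\<Rightarrow>real. (((x 0)^2)^2 + ((x 1)^2)^2 - 3 * (x 0)^2 * (x 1)^2) ^ k)"
  have hp: "hpoly 2 (4 * k) a x = P x" for x
  proof -
    have "hpoly 2 (4 * k) a x = (\<Sum>i = 0..2 * (2 * k). a (gidx (4 * k) i) * (\<Prod>n<2. x n ^ gidx (4 * k) i n))"
      unfolding hpoly_def by (simp add: sum_MI2)
    also have "\<dots> = (\<Sum>i = 0..2 * (2 * k). if even i then
        (\<lambda>j. Bcoef k j * x 0 ^ (4 * k - 2 * j) * x 1 ^ (2 * j)) (i div 2) else 0)"
    proof (rule sum.cong[OF refl])
      fix i
      show "a (gidx (4 * k) i) * (\<Prod>n<2. x n ^ gidx (4 * k) i n) = (if even i then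
        (\<lambda>j. Bcoef k j * x 0 ^ (4 * k - 2 * j) * x 1 ^ (2 * j)) (i div 2) else 0)"
      proof (cases "even i")
        case True
        then obtain m where "i = 2 * m" by (auto elim!: evenE)
        thus ?thesis by (simp add: a_def gidx_def prod2 mult_ac)
      next
        case False
        thus ?thesis by (simp add: a_def gidx_def)
      qed
    qed
    also have "\<dots> = (\<Sum>j = 0..2 * k. Bcoef k j * x 0 ^ (4 * k - 2 * j) * x 1 ^ (2 * j))"
      by (rule even_sum)
    also have "\<dots> = (\<Sum>j = 0..2 * k. Bcoef k j * ((x 0)^2) ^ (2 * k - j) * ((x 1)^2) ^ j)"
    proof (rule sum.cong[OF refl])
      fix j
      have "4 * k - 2 * j = 2 * (2 * k - j)" by simp
      thus "Bcoef k j * x 0 ^ (4 * k - 2 * j) * x 1 ^ (2 * j) = Bcoef k j * ((x 0)^2) ^ (2 * k - j) * ((x 1)^2) ^ j"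
        by (simp add: power_mult)
    qed
    also have "\<dots> = P x" unfolding P_def by (rule core)
    finally show ?thesis .
  qed
  have Pb: "\<bar>P x\<bar> \<le> 1" if "\<forall>i<2. \<bar>x i\<bar> \<le> 1" for x
  proof -
    have "\<bar>x 0\<bar> \<le> 1" "\<bar>x 1\<bar> \<le> 1" using that by auto
    hence "(x 0)^2 \<le> 1" "(x 1)^2 \<le> 1" by (simp_all add: abs_le_square_iff[of _ 1, simplified])
    hence "\<bar>((x 0)^2)^2 + ((x 1)^2)^2 - 3 * (x 0)^2 * (x 1)^2\<bar> \<le> 1"
      by (intro bound_base) auto
    hence "\<bar>(((x 0)^2)^2 + ((x 1)^2)^2 - 3 * (x 0)^2 * (x 1)^2)\<bar> ^ k \<le> 1"
      by (simp add: power_le_one)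
    thus ?thesis unfolding P_def by (simp only: power_abs)
  qed
  have norm1: "poly_norm 2 (4 * k) a = 1"
    unfolding poly_norm_def
  proof (rule cSup_eq_maximum)
    let ?x = "\<lambda>i::nat. if i = 0 then 1 else (0::real)"
    have "\<bar>hpoly 2 (4 * k) a ?x\<bar> = 1" by (simp add: hp P_def)
    moreover have "\<forall>i<2. \<bar>?x i\<bar> \<le> 1" by simp
    ultimately show "1 \<in> {\<bar>hpoly 2 (4 * k) a x\<bar> |x. \<forall>i<2. \<bar>x i\<bar> \<le> 1}" by force
    show "\<And>y. y \<in> {\<bar>hpoly 2 (4 * k) a x\<bar> |x. \<forall>i<2. \<bar>x i\<bar> \<le> 1} \<Longrightarrow> y \<le> 1"
      using Pb by (auto simp: hp)
  qed
  have e1: "2 * real (4 * k) / (real (4 * k) + 1) = 8 * real k / (4 * real k + 1)" by simp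
  have e2: "(real (4 * k) + 1) / (2 * real (4 * k)) = (4 * real k + 1) / (8 * real k)" by simp
  let ?p = "8 * real k / (4 * real k + 1)"
  have lhs: "(\<Sum>\<alpha>\<in>multi_indices 2 (4 * k). \<bar>a \<alpha>\<bar> powr ?p) = (\<Sum>j = 0..2 * k. \<bar>Bcoef k j\<bar> powr ?p)"
  proof -
    have "(\<Sum>\<alpha>\<in>multi_indices 2 (4 * k). \<bar>a \<alpha>\<bar> powr ?p) = (\<Sum>i = 0..2 * (2 * k). \<bar>a (gidx (4 * k) i)\<bar> powr ?p)"
      by (simp add: sum_MI2)
    also have "\<dots> = (\<Sum>i = 0..2 * (2 * k). if even i then (\<lambda>j. \<bar>Bcoef k j\<bar> powr ?p) (i div 2) else 0)"
      by (rule sum.cong[OF refl]) (simp add: a_def gidx_def)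
    also have "\<dots> = (\<Sum>j = 0..2 * k. \<bar>Bcoef k j\<bar> powr ?p)" by (rule even_sum)
    finally show ?thesis .
  qed
  show ?thesis
    unfolding BH_real_def
  proof (rule Inf_greatest)
    fix z assume "z \<in> {ereal D |D. \<forall>N a.
      (\<Sum>\<alpha>\<in>multi_indices N (4 * k). \<bar>a \<alpha>\<bar> powr (2 * real (4 * k) / (real (4 * k) + 1)))
        powr ((real (4 * k) + 1) / (2 * real (4 * k))) \<le> D * poly_norm N (4 * k) a}"
    then obtain D where zD: "z = ereal D" and H: "\<forall>N a.
      (\<Sum>\<alpha>\<in>multi_indices N (4 * k). \<bar>a \<alpha>\<bar> powr (2 * real (4 * k) / (real (4 * k) + 1)))
        powr ((real (4 * k) + 1) / (2 * real (4 * k))) \<le> D * poly_norm N (4 * k) a" by blast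
    from spec[OF spec[OF H, of 2], of a] have
      "(\<Sum>j = 0..2 * k. \<bar>Bcoef k j\<bar> powr ?p) powr ((4 * real k + 1) / (8 * real k)) \<le> D"
      unfolding e1 e2 lhs norm1 by simp
    thus "ereal ((\<Sum>j = 0..2 * k. \<bar>Bcoef k j\<bar> powr ?p) powr ((4 * real k + 1) / (8 * real k))) \<le> z"
      using zD by simp
  qed
qed

end
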